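(* Assume (C-1) and (C-2), and let $\mathbf M_t$ be symmetric PSD with $\sigma_{\max}(\mathbf M_t)=1$ and $\mathrm{srank}(\mathbf M_t)\le s$. Then the subspace zeroth-order gradient estimator $\widehat{\mathbf g}_t$ satisfies $$\mathbb E\big[\|\widehat{\mathbf g}_t\|\big]^2\le\mathbb E\big[\|\widehat{\mathbf g}_t\|^2\big]\le\frac{15\mu^2L^2s^3}{2}+4(s+2)\Big(\|\nabla\mathcal{L}(\bm\theta_t)\|^2+\frac{\sigma^2}{B}\Big),$$ where the expectation is over $\mathbf u_t$ and the minibatch $\mathcal B_t$ of size $B$.
   Context: Per-sample losses $\mathcal{L}_i$, overall loss $\mathcal{L}$, minibatch loss $\mathcal{L}(\bm\theta;\mathcal B_t)=\frac1B\sum_{i\in\mathcal B_t}\mathcal{L}_i(\bm\theta)$ with $i\in\mathcal B_t$ sampled independently. (C-1): each $\mathcal{L}_i$ is $L$-smooth. (C-2): $\mathbb E[\nabla\mathcal{L}_i(\bm\theta)]=\nabla\mathcal{L}(\bm\theta)$, $\mathbb E\|\nabla\mathcal{L}(\bm\theta)-\nabla\mathcal{L}_i(\bm\theta)\|^2\le\sigma^2$, $\|\nabla\mathcal{L}(\bm\theta)\|\le G$. Estimator: $\widehat{\mathbf g}_t=\frac{\mathcal{L}(\bm\theta_t+\mu\mathbf M_t\mathbf u_t;\mathcal B_t)-\mathcal{L}(\bm\theta_t-\mu\mathbf M_t\mathbf u_t;\mathcal B_t)}{2\mu}\mathbf M_t\mathbf u_t$ with $\mathbf u_t\sim\mathcal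 N(\mathbf 0,\mathbf I_d)$, $\mu>0$. $\mathrm{srank}(\mathbf A)=\sum_i\sigma_i(\mathbf A)^2/\sigma_{\max}(\mathbf A)^2$. *)

theory Defs
  imports "HOL-Probability.Probability"
begin

definition std_gauss_vec :: "(real^'d) measure" where
  "std_gauss_vec = density lborel (\<lambda>x. ennreal (\<Prod>i\<in>UNIV. std_normal_density (x $ i)))"

text \<open>Largest singular value = spectral (operator) norm.\<close>
definition sigma_max :: "real^'n^'m \<Rightarrow> real" where
  "sigma_max A = onorm (\<lambda>x. A *v x)"

text \<open>Sum of squared singular values = squared Frobenius norm.\<close>
definition sum_sq_singular :: "real^'n^'m \<Rightarrow> real" where
  "sum_sq_singular A = (\<Sum>i\<in>UNIV. \<Sum>j\<in>UNIV. (A $ i $ j)\<^sup>2)"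

definition srank :: "real^'n^'m \<Rightarrow> real" where
  "srank A = sum_sq_singular A / (sigma_max A)\<^sup>2"

definition batch_loss :: "('i \<Rightarrow> real^'d \<Rightarrow> real) \<Rightarrow> nat \<Rightarrow> (nat \<Rightarrow> 'i) \<Rightarrow> real^'d \<Rightarrow> real" where
  "batch_loss loss B b \<theta> = (1 / real B) * (\<Sum>j<B. loss (b j) \<theta>)"

definition zo_est :: "('i \<Rightarrow> real^'d \<Rightarrow> real) \<Rightarrow> nat \<Rightarrow> real \<Rightarrow> real^'d^'d
      \<Rightarrow> real^'d \<Rightarrow> real^'d \<Rightarrow> (nat \<Rightarrow> 'i) \<Rightarrow> real^'d" where
  "zo_est loss B \<mu> M \<theta> u b =
     ((batch_loss loss B b (\<theta> + \<mu> *\<^sub>R (M *v u)) - batch_loss loss B b (\<theta> - \<mu> *\<^sub>R (M *v u))) / (2 * \<mu>))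
       *\<^sub>R (M *v u)"

end

theory Submission
  imports Defs
begin




lemma Basis_vec_range: "(Basis :: (real^'d) set) = range (\<lambda>i. axis i 1)"
  by (auto simp: Basis_vec_def)

lemma nn_integral_lborel_vec_prod:
  fixes g :: "'d::finite \<Rightarrow> real \<Rightarrow> ennreal"
  assumes [measurable]: "\<And>i. g i \<in> borel_measurable borel"
  shows "(\<integral>\<^sup>+x. (\<Prod>i\<in>UNIV. g i (x$i)) \<partial>(lborel::(real^'d) measure)) = (\<Prod>i\<in>UNIV. \<integral>\<^sup>+x. g i x \<partial>lborel)"
proof -
  define h where "h b = g (SOME i. b = axis i (1::real))" for b :: "real^'d"
  have inj: "inj (\<lambda>i::'d. axis i (1::real))" by (auto simp: inj_def axis_eq_axis)
  have hax: "h (axis i 1) = g i" for i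
    unfolding h_def by (rule arg_cong[where f=g]) (auto simp: axis_eq_axis)
  have "(\<integral>\<^sup>+x. (\<Prod>b\<in>Basis. h b (x \<bullet> b)) \<partial>(lborel::(real^'d) measure)) = (\<Prod>b\<in>Basis. (\<integral>\<^sup>+x. h b x \<partial>lborel))"
    by (rule nn_integral_lborel_prod) (auto simp: Basis_vec_range hax)
  moreover have "(\<Prod>b\<in>Basis. h b (x \<bullet> b)) = (\<Prod>i\<in>UNIV. g i (x$i))" for x :: "real^'d"
    unfolding Basis_vec_range by (subst prod.reindex[OF inj]) (simp add: hax inner_axis)
  moreover have "(\<Prod>b\<in>Basis. (\<integral>\<^sup>+x. h b x \<partial>lborel)) = (\<Prod>i\<in>UNIV. \<integral>\<^sup>+x. g i x \<partial>lborel)"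
    unfolding Basis_vec_range by (subst prod.reindex[OF inj]) (simp add: hax)
  ultimately show ?thesis by simp
qed



abbreviation "Sd \<equiv> density lborel (\<lambda>x. ennreal (std_normal_density x))"

lemma prob_space_Sd: "prob_space Sd"
  using prob_space_normal_density[of 1 0] by simp

lemma sets_Sd[simp]: "sets Sd = sets borel" by simp

lemma gauss_box:
  assumes [measurable]: "\<And>i. A i \<in> sets borel"
  shows "emeasure (std_gauss_vec :: (real^'d) measure) {u. \<forall>i. u$i \<in> A i} = (\<Prod>i\<in>UNIV. emeasure Sd (A i))"
proof -
  have eqs: "{u::real^'d. \<forall>i. u$i \<in> A i} = (\<Inter>i\<in>UNIV. (\<lambda>u. u$i) -` A i \<inter> space lborel)" by auto
  have meas: "{u::real^'d. \<forall>i. u$i \<in> A i} \<in> sets lborel"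
    unfolding eqs by (intro sets.finite_INT measurable_sets[OF _ assms]) auto
  have "emeasure (std_gauss_vec :: (real^'d) measure) {u. \<forall>i. u$i \<in> A i}
     = (\<integral>\<^sup>+x. ennreal (\<Prod>i\<in>UNIV. std_normal_density (x $ i)) * indicator {u::real^'d. \<forall>i. u$i \<in> A i} x \<partial>lborel)"
    unfolding std_gauss_vec_def using meas by (subst emeasure_density) auto
  also have "\<dots> = (\<integral>\<^sup>+x. (\<Prod>i\<in>UNIV. ennreal (std_normal_density (x $ i)) * indicator (A i) (x$i)) \<partial>lborel)"
    apply (intro nn_integral_cong)
    apply (subst prod.distrib)
    apply (subst prod_ennreal[symmetric])
     apply (simp add: normal_density_nonneg)
    apply (auto simp: indicator_def)
    done
  also have "\<dots> = (\<Prod>i\<in>UNIV. \<integral>\<^sup>+x. ennreal (std_normal_density x) * indicator (A i) x \<partial>lborel)"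
    by (rule nn_integral_lborel_vec_prod) measurable
  also have "\<dots> = (\<Prod>i\<in>UNIV. emeasure Sd (A i))"
    by (simp add: emeasure_density)
  finally show ?thesis .
qed



lemma space_gauss[simp]: "space std_gauss_vec = UNIV" by (simp add: std_gauss_vec_def)
lemma sets_gauss[simp]: "sets std_gauss_vec = sets borel" by (simp add: std_gauss_vec_def)

lemma prob_space_gauss: "prob_space (std_gauss_vec :: (real^'d) measure)"
proof (rule prob_spaceI)
  have "space (std_gauss_vec :: (real^'d) measure) = {u. \<forall>i. u$i \<in> UNIV}"
    by simp
  then show "emeasure (std_gauss_vec :: (real^'d) measure) (space std_gauss_vec) = 1"
    using gauss_box[of "\<lambda>_. UNIV"] prob_space.emeasure_space_1[OF prob_space_Sd]
    by simp
qed



lemma meas_restrict_gauss: "(\<lambda>u::real^'d. \<lambda>i\<in>UNIV. u$i) \<in> measurable std_gauss_vec (\<Pi>\<^sub>M i\<in>UNIV. borel)"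
  by (auto intro!: measurable_restrict simp: measurable_cong_sets[OF sets_gauss refl])

lemma gauss_distr_PiM:
  "distr (std_gauss_vec :: (real^'d) measure) (\<Pi>\<^sub>M i\<in>UNIV. borel) (\<lambda>u. \<lambda>i\<in>UNIV. u$i) = (\<Pi>\<^sub>M i\<in>UNIV. Sd)"
proof (rule product_sigma_finite.PiM_eqI)
  show "product_sigma_finite (\<lambda>_::'d. Sd)"
    unfolding product_sigma_finite_def using prob_space_Sd
    by (simp add: prob_space_imp_sigma_finite)
  show "finite (UNIV :: 'd set)" by simp
  show "sets (distr std_gauss_vec (Pi\<^sub>M UNIV (\<lambda>i. borel)) (\<lambda>u. \<lambda>i\<in>UNIV. u $ i)) = sets (Pi\<^sub>M UNIV (\<lambda>_::'d. Sd))"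
    unfolding sets_distr by (rule sets_PiM_cong) auto
  fix A :: "'d \<Rightarrow> real set" assume A: "\<And>i. i \<in> UNIV \<Longrightarrow> A i \<in> sets Sd"
  have "Pi\<^sub>E UNIV A \<in> sets (\<Pi>\<^sub>M i\<in>UNIV. (borel :: real measure))"
    using A by (intro sets_PiM_I_finite) auto
  moreover have "(\<lambda>u::real^'d. \<lambda>i\<in>UNIV. u$i) -` Pi\<^sub>E UNIV A \<inter> space std_gauss_vec = {u. \<forall>i. u$i \<in> A i}"
    by auto
  ultimately show "emeasure (distr std_gauss_vec (Pi\<^sub>M UNIV (\<lambda>i. borel)) (\<lambda>u. \<lambda>i\<in>UNIV. u $ i)) (Pi\<^sub>E UNIV A) =
         (\<Prod>i\<in>UNIV. emeasure Sd (A i))"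
    using A by (subst emeasure_distr[OF meas_restrict_gauss]) (simp_all add: gauss_box)
qed

lemma gauss_distr_comp: "distr (std_gauss_vec :: (real^'d) measure) borel (\<lambda>u. u$i) = Sd"
proof -
  have "distr (std_gauss_vec :: (real^'d) measure) borel (\<lambda>u. u$i)
     = distr (distr (std_gauss_vec :: (real^'d) measure) (\<Pi>\<^sub>M i\<in>UNIV. borel) (\<lambda>u. \<lambda>i\<in>UNIV. u$i)) borel (\<lambda>f. f i)"
    by (subst distr_distr) (auto simp: comp_def meas_restrict_gauss)
  also have "\<dots> = distr (\<Pi>\<^sub>M i\<in>(UNIV::'d set). Sd) Sd (\<lambda>f. f i)"
    unfolding gauss_distr_PiM by (rule distr_cong) auto
  also have "\<dots> = Sd"
    by (rule distr_PiM_component) (auto simp: prob_space_Sd)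
  finally show ?thesis .
qed

lemma gauss_indep: "prob_space.indep_vars (std_gauss_vec :: (real^'d) measure) (\<lambda>_. borel) (\<lambda>i u. u$i) UNIV"
proof -
  interpret prob_space "std_gauss_vec :: (real^'d) measure" by (rule prob_space_gauss)
  show ?thesis
    apply (subst indep_vars_iff_distr_eq_PiM)
      apply (auto simp: measurable_cong_sets[OF sets_gauss refl])
    apply (simp add: gauss_distr_comp gauss_distr_PiM)
    done
qed

lemma gauss_comp_distributed: "distributed (std_gauss_vec :: (real^'d) measure) lborel (\<lambda>u. u$i) std_normal_density"
  unfolding distributed_def
proof (intro conjI)
  show "distr std_gauss_vec lborel (\<lambda>u. u $ i) = density lborel (\<lambda>x. ennreal (std_normal_density x))"
    using gauss_distr_comp[of i] by (subst distr_cong[OF refl, where L=borel]) auto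
qed (auto simp: measurable_cong_sets[OF sets_gauss refl])




lemma inner_vec_sum: "(a::real^'d) \<bullet> u = (\<Sum>i\<in>UNIV. a$i * u$i)"
  by (simp add: inner_vec_def)

lemma norm_vec_sum: "norm (a::real^'d) = sqrt (\<Sum>i\<in>UNIV. (a$i)\<^sup>2)"
  by (simp add: norm_vec_def L2_set_def)

lemma gauss_inner_distributed:
  fixes a :: "real^'d"
  assumes a: "a \<noteq> 0"
  shows "distributed (std_gauss_vec :: (real^'d) measure) lborel (\<lambda>u. a \<bullet> u) (normal_density 0 (norm a))"
proof -
  interpret prob_space "std_gauss_vec :: (real^'d) measure" by (rule prob_space_gauss)
  define I where "I = {i. a$i \<noteq> 0}"
  have I: "finite I" "I \<noteq> {}" using a by (auto simp: I_def vec_eq_iff)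
  have ind: "indep_vars (\<lambda>_. borel) (\<lambda>i u. a$i * u$i) I"
    using indep_vars_compose2[OF indep_vars_subset[OF gauss_indep, of I], of "\<lambda>i x. a$i * x" "\<lambda>_. borel"]
    by auto
  have dist: "distributed std_gauss_vec lborel (\<lambda>u. a$i * u$i) (normal_density 0 (\<bar>a$i\<bar>))" if "i \<in> I" for i
    using normal_density_affine[OF gauss_comp_distributed[of i], where \<alpha>="a$i" and \<beta>=0] that
    by (simp add: I_def)
  have "distributed std_gauss_vec lborel (\<lambda>u. \<Sum>i\<in>I. a$i * u$i)
        (normal_density (\<Sum>i\<in>I. 0) (sqrt (\<Sum>i\<in>I. (\<bar>a$i\<bar>)\<^sup>2)))"
    by (rule sum_indep_normal[OF I ind]) (auto simp: I_def dist)
  moreover have "(\<lambda>u. \<Sum>i\<in>I. a$i * u$i) = (\<lambda>u. a \<bullet> u)"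
    unfolding inner_vec_sum by (intro ext sum.mono_neutral_left) (auto simp: I_def)
  moreover have "sqrt (\<Sum>i\<in>I. (\<bar>a$i\<bar>)\<^sup>2) = norm a"
    unfolding norm_vec_sum by (intro arg_cong[where f=sqrt]) (simp, intro sum.mono_neutral_left, auto simp: I_def)
  ultimately show ?thesis by simp
qed

lemma gauss_inner_moment:
  fixes a :: "real^'d"
  assumes k: "k > 0"
  shows "(\<integral>\<^sup>+u. ennreal ((a \<bullet> u)^(2*k)) \<partial>std_gauss_vec) = ennreal (fact (2*k) / (2^k * fact k) * norm a ^ (2*k))"
proof (cases "a = 0")
  case True then show ?thesis using k by (simp add: power_0_left)
next
  case False
  have s: "norm a > 0" using False by simp
  have "(\<integral>\<^sup>+u. ennreal ((a \<bullet> u)^(2*k)) \<partial>std_gauss_vec)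
      = (\<integral>\<^sup>+x. ennreal (normal_density 0 (norm a) x) * ennreal (x^(2*k)) \<partial>lborel)"
    by (rule distributed_nn_integral[OF gauss_inner_distributed[OF False], symmetric]) simp
  also have "\<dots> = (\<integral>\<^sup>+x. ennreal (normal_density 0 (norm a) x * (x - 0)^(2*k)) \<partial>lborel)"
    by (intro nn_integral_cong) (simp add: ennreal_mult' normal_density_nonneg)
  also have "\<dots> = ennreal (fact (2 * k) / ((2 / (norm a)\<^sup>2)^k * fact k))"
    using normal_moment_even[OF s, of 0 k]
    by (subst nn_integral_eq_integrable) (auto simp: has_bochner_integral_iff normal_density_nonneg)
  also have "fact (2 * k) / ((2 / (norm a)\<^sup>2)^k * fact k) = fact (2*k) / (2^k * fact k) * norm a ^ (2*k)"
    using s by (simp add: power_divide power_mult field_simps flip: power_mult)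
  finally show ?thesis .
qed



lemma r4: "(x+y)^4 + (x-y)^4 = 2*x^4+2*y^4+12*(x\<^sup>2*y\<^sup>2::real)"
  by algebra
lemma r5: "3*(p+2*q+r)\<^sup>2 + 3*(p-2*q+r)\<^sup>2 = 6*p\<^sup>2 + 6*r\<^sup>2 + 12*(p*r + 2*q\<^sup>2::real)"
  by algebra
lemma nwa: "(norm (w+a::'a::real_inner))\<^sup>2 = (norm w)\<^sup>2 + 2*(w \<bullet> a) + (norm a)\<^sup>2"
  by (simp add: power2_norm_eq_inner inner_add_left inner_add_right inner_commute)
lemma nwb: "(norm (w-a::'a::real_inner))\<^sup>2 = (norm w)\<^sup>2 - 2*(w \<bullet> a) + (norm a)\<^sup>2"
  by (simp add: power2_norm_eq_inner inner_diff_left inner_diff_right inner_commute)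
lemma pow4sq: "(x::real)^4 = (x\<^sup>2)\<^sup>2" by algebra
lemma nn4[simp]: "0 \<le> (x::real)^4" by (simp add: zero_le_even_power)

lemma gauss_m4: "(\<integral>\<^sup>+u. ennreal ((a \<bullet> u)^4) \<partial>std_gauss_vec) = ennreal (3 * norm (a::real^'d) ^ 4)"
  using gauss_inner_moment[of 2 a] by (simp add: fact_numeral)

lemma gauss_m6: "(\<integral>\<^sup>+u. ennreal ((a \<bullet> u)^6) \<partial>std_gauss_vec) = ennreal (15 * norm (a::real^'d) ^ 6)"
  using gauss_inner_moment[of 3 a] by (simp add: fact_numeral)

lemma meas_inner_gauss[measurable]: "(\<lambda>u. a \<bullet> u) \<in> borel_measurable (std_gauss_vec :: (real^'d) measure)"
  by (simp add: measurable_cong_sets[OF sets_gauss refl])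

lemma gauss_mixed:
  fixes w a :: "real^'d"
  shows "(\<integral>\<^sup>+u. ennreal ((w \<bullet> u)\<^sup>2 * (a \<bullet> u)\<^sup>2) \<partial>std_gauss_vec) = ennreal ((norm w)\<^sup>2 * (norm a)\<^sup>2 + 2 * (w \<bullet> a)\<^sup>2)"
proof -
  let ?X = "(\<integral>\<^sup>+u. ennreal ((w \<bullet> u)\<^sup>2 * (a \<bullet> u)\<^sup>2) \<partial>std_gauss_vec)"
  have pw: "((w+a) \<bullet> u)^4 + ((w-a) \<bullet> u)^4 = (2 * (w \<bullet> u)^4 + 2 * (a \<bullet> u)^4) + 12 * ((w \<bullet> u)\<^sup>2 * (a \<bullet> u)\<^sup>2)" for u
    unfolding inner_add_left inner_diff_left r4 by simp
  have "ennreal (3 * norm (w+a) ^ 4) + ennreal (3 * norm (w-a) ^ 4)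
     = (\<integral>\<^sup>+u. ennreal (((w+a) \<bullet> u)^4) \<partial>std_gauss_vec) + (\<integral>\<^sup>+u. ennreal (((w-a) \<bullet> u)^4) \<partial>std_gauss_vec)"
    by (simp only: gauss_m4)
  also have "\<dots> = (\<integral>\<^sup>+u. ennreal (((w+a) \<bullet> u)^4) + ennreal (((w-a) \<bullet> u)^4) \<partial>std_gauss_vec)"
    by (rule nn_integral_add[symmetric]) auto
  also have "\<dots> = (\<integral>\<^sup>+u. ennreal (2 * (w \<bullet> u)^4 + 2 * (a \<bullet> u)^4) + 12 * ennreal ((w \<bullet> u)\<^sup>2 * (a \<bullet> u)\<^sup>2) \<partial>std_gauss_vec)"
  proof (intro nn_integral_cong)
    fix u
    have "ennreal (((w+a) \<bullet> u)^4) + ennreal (((w-a) \<bullet> u)^4) = ennreal (((w+a) \<bullet> u)^4 + ((w-a) \<bullet> u)^4)"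
      by (rule ennreal_plus[symmetric]) simp_all
    also have "\<dots> = ennreal (2 * (w \<bullet> u)^4 + 2 * (a \<bullet> u)^4) + ennreal (12 * ((w \<bullet> u)\<^sup>2 * (a \<bullet> u)\<^sup>2))"
      unfolding pw by (rule ennreal_plus) simp_all
    also have "ennreal (12 * ((w \<bullet> u)\<^sup>2 * (a \<bullet> u)\<^sup>2)) = 12 * ennreal ((w \<bullet> u)\<^sup>2 * (a \<bullet> u)\<^sup>2)"
      by (simp add: ennreal_mult')
    finally show "ennreal (((w+a) \<bullet> u)^4) + ennreal (((w-a) \<bullet> u)^4) = ennreal (2 * (w \<bullet> u)^4 + 2 * (a \<bullet> u)^4) + 12 * ennreal ((w \<bullet> u)\<^sup>2 * (a \<bullet> u)\<^sup>2)" .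
  qed
  also have "\<dots> = (\<integral>\<^sup>+u. ennreal (2 * (w \<bullet> u)^4 + 2 * (a \<bullet> u)^4) \<partial>std_gauss_vec) + 12 * ?X"
    by (subst nn_integral_add) (auto simp: nn_integral_cmult)
  also have "(\<integral>\<^sup>+u. ennreal (2 * (w \<bullet> u)^4 + 2 * (a \<bullet> u)^4) \<partial>std_gauss_vec)
     = (\<integral>\<^sup>+u. 2 * ennreal ((w \<bullet> u)^4) + 2 * ennreal ((a \<bullet> u)^4) \<partial>std_gauss_vec)"
    by (intro nn_integral_cong) (simp add: ennreal_plus ennreal_mult')
  also have "\<dots> = 2 * ennreal (3 * norm w ^ 4) + 2 * ennreal (3 * norm a ^ 4)"
    by (subst nn_integral_add) (auto simp: nn_integral_cmult gauss_m4)
  also have "\<dots> = ennreal (6 * norm w ^ 4 + 6 * norm a ^ 4)"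
    by (simp add: ennreal_mult' ennreal_plus)
  finally have eq: "ennreal (3 * norm (w+a) ^ 4) + ennreal (3 * norm (w-a) ^ 4) = ennreal (6 * norm w ^ 4 + 6 * norm a ^ 4) + 12 * ?X" .
  have "3 * norm (w+a) ^ 4 + 3 * norm (w-a) ^ 4 = 6 * norm w ^ 4 + 6 * norm a ^ 4 + 12 * ((norm w)\<^sup>2 * (norm a)\<^sup>2 + 2 * (w \<bullet> a)\<^sup>2)"
    unfolding pow4sq nwa nwb r5 ..
  note req = this
  have "ennreal (3 * norm (w+a) ^ 4) + ennreal (3 * norm (w-a) ^ 4) = ennreal (3 * norm (w+a) ^ 4 + 3 * norm (w-a) ^ 4)"
    by (rule ennreal_plus[symmetric]) simp_all
  also have "\<dots> = ennreal (6 * norm w ^ 4 + 6 * norm a ^ 4 + 12 * ((norm w)\<^sup>2 * (norm a)\<^sup>2 + 2 * (w \<bullet> a)\<^sup>2))"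
    unfolding req ..
  also have "\<dots> = ennreal (6 * norm w ^ 4 + 6 * norm a ^ 4) + 12 * ennreal ((norm w)\<^sup>2 * (norm a)\<^sup>2 + 2 * (w \<bullet> a)\<^sup>2)"
    by (subst ennreal_plus) (auto simp: ennreal_mult')
  finally have "ennreal (3 * norm (w+a) ^ 4) + ennreal (3 * norm (w-a) ^ 4)
     = ennreal (6 * norm w ^ 4 + 6 * norm a ^ 4) + 12 * ennreal ((norm w)\<^sup>2 * (norm a)\<^sup>2 + 2 * (w \<bullet> a)\<^sup>2)" .
  from eq[symmetric] this have "ennreal (6 * norm w ^ 4 + 6 * norm a ^ 4) + 12 * ?X = ennreal (6 * norm w ^ 4 + 6 * norm a ^ 4) + 12 * ennreal ((norm w)\<^sup>2 * (norm a)\<^sup>2 + 2 * (w \<bullet> a)\<^sup>2)"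
    by (rule trans)
  then have "12 * ?X = 12 * ennreal ((norm w)\<^sup>2 * (norm a)\<^sup>2 + 2 * (w \<bullet> a)\<^sup>2)"
    unfolding ennreal_add_left_cancel by simp
  then show ?thesis
    unfolding ennreal_mult_cancel_left by simp
qed



lemma norm_sq_vec: "(norm (v::real^'d))\<^sup>2 = (\<Sum>i\<in>UNIV. (v$i)\<^sup>2)"
  unfolding norm_vec_sum by (simp add: sum_nonneg)

lemma norm_Mv_sq: "(norm ((M::real^'d^'e) *v u))\<^sup>2 = (\<Sum>i\<in>UNIV. (M$i \<bullet> u)\<^sup>2)"
  unfolding norm_sq_vec matrix_vector_mul_component ..

lemma frob_rows: "sum_sq_singular (M::real^'d^'e) = (\<Sum>i\<in>UNIV. (norm (M$i))\<^sup>2)"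
  unfolding sum_sq_singular_def norm_sq_vec ..

lemma onorm_le1:
  assumes "sigma_max (M::real^'d^'e) = 1"
  shows "norm (M *v x) \<le> norm x"
  using onorm[OF matrix_vector_mul_bounded_linear[of M], of x] assms
  by (simp add: sigma_max_def)

lemma frob_le_s:
  assumes "sigma_max (M::real^'d^'e) = 1" "srank M \<le> s"
  shows "sum_sq_singular M \<le> s"
  using assms by (simp add: srank_def)

lemma sym_inner:
  assumes "transpose M = (M::real^'d^'d)"
  shows "g \<bullet> (M *v u) = (M *v g) \<bullet> u"
proof -
  have "g \<bullet> (M *v u) = (g v* M) \<bullet> u" by (simp add: dot_lmul_matrix)
  also have "g v* M = transpose M *v g" by simp
  finally show ?thesis using assms by simp
qed

lemma gauss_A5:
  fixes M :: "real^'d^'e" and w :: "real^'d"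
  assumes nb: "norm (M *v w) \<le> norm w"
  shows "(\<integral>\<^sup>+u. ennreal ((w \<bullet> u)\<^sup>2 * (norm (M *v u))\<^sup>2) \<partial>std_gauss_vec) \<le> ennreal ((sum_sq_singular M + 2) * (norm w)\<^sup>2)"
proof -
  have "(\<integral>\<^sup>+u. ennreal ((w \<bullet> u)\<^sup>2 * (norm (M *v u))\<^sup>2) \<partial>std_gauss_vec)
      = (\<integral>\<^sup>+u. (\<Sum>i\<in>UNIV. ennreal ((w \<bullet> u)\<^sup>2 * (M$i \<bullet> u)\<^sup>2)) \<partial>std_gauss_vec)"
    unfolding norm_Mv_sq sum_distrib_left
    by (intro nn_integral_cong) (simp add: sum_ennreal)
  also have "\<dots> = (\<Sum>i\<in>UNIV. \<integral>\<^sup>+u. ennreal ((w \<bullet> u)\<^sup>2 * (M$i \<bullet> u)\<^sup>2) \<partial>std_gauss_vec)"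
    by (rule nn_integral_sum) simp
  also have "\<dots> = (\<Sum>i\<in>UNIV. ennreal ((norm w)\<^sup>2 * (norm (M$i))\<^sup>2 + 2 * (w \<bullet> M$i)\<^sup>2))"
    by (simp only: gauss_mixed)
  also have "\<dots> = ennreal (\<Sum>i\<in>UNIV. (norm w)\<^sup>2 * (norm (M$i))\<^sup>2 + 2 * (w \<bullet> M$i)\<^sup>2)"
    by (rule sum_ennreal) simp
  also have "(\<Sum>i\<in>UNIV. (norm w)\<^sup>2 * (norm (M$i))\<^sup>2 + 2 * (w \<bullet> M$i)\<^sup>2)
      = (norm w)\<^sup>2 * sum_sq_singular M + 2 * (norm (M *v w))\<^sup>2"
    by (simp add: sum.distrib sum_distrib_left frob_rows norm_Mv_sq inner_commute)
  also have "\<dots> \<le> (sum_sq_singular M + 2) * (norm w)\<^sup>2"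
  proof -
    have "(norm (M *v w))\<^sup>2 \<le> (norm w)\<^sup>2" using nb by (simp add: power_mono)
    then show ?thesis by (simp add: algebra_simps)
  qed
  finally show ?thesis by (simp add: ennreal_leI)
qed



lemma holder3:
  fixes c y :: "'i \<Rightarrow> real"
  assumes J: "finite J" and c: "\<And>i. i \<in> J \<Longrightarrow> c i > 0" and y: "\<And>i. i \<in> J \<Longrightarrow> y i \<ge> 0"
  shows "(\<Sum>i\<in>J. y i)^3 \<le> (\<Sum>i\<in>J. c i)\<^sup>2 * (\<Sum>i\<in>J. y i ^ 3 / (c i)\<^sup>2)"
proof (cases "J = {}")
  case True then show ?thesis by simp
next
  case False
  define C where "C = (\<Sum>i\<in>J. c i)"
  have C: "C > 0" unfolding C_def using J False c by (intro sum_pos) auto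
  have "(\<Sum>i\<in>J. (c i / C) *\<^sub>R (y i / c i)) ^ 3 \<le> (\<Sum>i\<in>J. (c i / C) * (y i / c i) ^ 3)"
    using convex_on_sum[OF J False convex_power_odd[of 3], of "\<lambda>i. c i / C" "\<lambda>i. y i / c i"] C c y
    by (simp add: C_def[symmetric] sum_divide_distrib[symmetric] less_imp_le)
  also have "(\<Sum>i\<in>J. (c i / C) *\<^sub>R (y i / c i)) = (\<Sum>i\<in>J. y i) / C"
    using c by (simp add: sum_divide_distrib) (intro sum.cong, auto simp: field_simps dest: c)
  also have "(\<Sum>i\<in>J. (c i / C) * (y i / c i) ^ 3) = (\<Sum>i\<in>J. y i ^ 3 / (c i)\<^sup>2) / C"
    using c by (simp add: sum_divide_distrib) (intro sum.cong, auto simp: field_simps power2_eq_square power3_eq_cube)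
  finally have "((\<Sum>i\<in>J. y i) / C) ^ 3 \<le> (\<Sum>i\<in>J. y i ^ 3 / (c i)\<^sup>2) / C" .
  then have "((\<Sum>i\<in>J. y i) / C) ^ 3 * C^3 \<le> (\<Sum>i\<in>J. y i ^ 3 / (c i)\<^sup>2) / C * C^3"
    using C by (intro mult_right_mono) auto
  then show ?thesis using C by (simp add: C_def[symmetric] power_divide field_simps power2_eq_square power3_eq_cube)
qed



lemma gauss_A6:
  fixes M :: "real^'d^'e"
  shows "(\<integral>\<^sup>+u. ennreal ((norm (M *v u))^6) \<partial>std_gauss_vec) \<le> ennreal (15 * (sum_sq_singular M)^3)"
proof -
  define J where "J = {i. M$i \<noteq> 0}"
  define c where "c i = (norm (M$i))\<^sup>2" for i
  have cpos: "i \<in> J \<Longrightarrow> c i > 0" for i by (simp add: J_def c_def)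
  have S: "sum_sq_singular M = (\<Sum>i\<in>J. c i)"
    unfolding frob_rows c_def by (intro sum.mono_neutral_right) (auto simp: J_def)
  have pw: "(norm (M *v u))^6 \<le> (sum_sq_singular M)\<^sup>2 * (\<Sum>i\<in>J. (M$i \<bullet> u)^6 / (c i)\<^sup>2)" for u
  proof -
    have "(norm (M *v u))^6 = ((norm (M *v u))\<^sup>2)^3" by (simp flip: power_mult)
    also have "(norm (M *v u))\<^sup>2 = (\<Sum>i\<in>J. (M$i \<bullet> u)\<^sup>2)"
      unfolding norm_Mv_sq by (intro sum.mono_neutral_right) (auto simp: J_def)
    also have "(\<Sum>i\<in>J. (M$i \<bullet> u)\<^sup>2)^3 \<le> (\<Sum>i\<in>J. c i)\<^sup>2 * (\<Sum>i\<in>J. ((M$i \<bullet> u)\<^sup>2)^3 / (c i)\<^sup>2)"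
      by (rule holder3) (auto simp: cpos)
    finally show ?thesis by (simp add: S flip: power_mult)
  qed
  have "(\<integral>\<^sup>+u. ennreal ((norm (M *v u))^6) \<partial>std_gauss_vec)
     \<le> (\<integral>\<^sup>+u. ennreal ((sum_sq_singular M)\<^sup>2) * (\<Sum>i\<in>J. ennreal ((M$i \<bullet> u)^6) * ennreal (1 / (c i)\<^sup>2)) \<partial>std_gauss_vec)"
  proof (intro nn_integral_mono)
    fix u
    have "ennreal ((norm (M *v u))^6) \<le> ennreal ((sum_sq_singular M)\<^sup>2 * (\<Sum>i\<in>J. (M$i \<bullet> u)^6 / (c i)\<^sup>2))"
      using pw by (rule ennreal_leI)
    also have "\<dots> = ennreal ((sum_sq_singular M)\<^sup>2) * (\<Sum>i\<in>J. ennreal ((M$i \<bullet> u)^6) * ennreal (1 / (c i)\<^sup>2))"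
      by (simp add: ennreal_mult' sum_ennreal[symmetric] ennreal_mult''[symmetric] zero_le_even_power del: sum_ennreal)
    finally show "ennreal ((norm (M *v u))^6) \<le> ennreal ((sum_sq_singular M)\<^sup>2) * (\<Sum>i\<in>J. ennreal ((M$i \<bullet> u)^6) * ennreal (1 / (c i)\<^sup>2))" .
  qed
  also have "\<dots> = ennreal ((sum_sq_singular M)\<^sup>2) * (\<Sum>i\<in>J. (\<integral>\<^sup>+u. ennreal ((M$i \<bullet> u)^6) \<partial>std_gauss_vec) * ennreal (1 / (c i)\<^sup>2))"
    by (simp add: nn_integral_cmult nn_integral_sum nn_integral_multc)
  also have "\<dots> = ennreal ((sum_sq_singular M)\<^sup>2) * (\<Sum>i\<in>J. ennreal (15 * c i))"
  proof -
    have "(\<integral>\<^sup>+u. ennreal ((M$i \<bullet> u)^6) \<partial>std_gauss_vec) * ennreal (1 / (c i)\<^sup>2) = ennreal (15 * c i)" if "i \<in> J" for i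
    proof -
      have "norm (M$i) ^ 6 * (1 / (c i)\<^sup>2) = c i"
        using cpos[OF that] unfolding c_def by (simp add: field_simps eval_nat_numeral)
      note e = this
      have "ennreal (15 * norm (M$i) ^ 6) * ennreal (1 / (c i)\<^sup>2) = ennreal (15 * norm (M$i) ^ 6 * (1 / (c i)\<^sup>2))"
        by (rule ennreal_mult[symmetric]) simp_all
      also have "15 * norm (M$i) ^ 6 * (1 / (c i)\<^sup>2) = 15 * c i" using e by simp
      finally show ?thesis by (simp only: gauss_m6)
    qed
    then show ?thesis by simp
  qed
  also have "(\<Sum>i\<in>J. ennreal (15 * c i)) = ennreal (15 * sum_sq_singular M)"
    by (subst sum_ennreal) (auto simp: c_def S sum_distrib_left)
  also have "ennreal ((sum_sq_singular M)\<^sup>2) * ennreal (15 * sum_sq_singular M) = ennreal ((sum_sq_singular M)\<^sup>2 * (15 * sum_sq_singular M))"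
    by (rule ennreal_mult[symmetric]) (auto simp: S c_def intro!: sum_nonneg)
  also have "(sum_sq_singular M)\<^sup>2 * (15 * sum_sq_singular M) = 15 * (sum_sq_singular M)^3"
    by (simp add: power2_eq_square power3_eq_cube)
  finally show ?thesis .
qed



lemma line_deriv:
  fixes h :: "'a::real_inner \<Rightarrow> real"
  assumes g: "\<And>y. GDERIV h y :> gh y"
  shows "DERIV (\<lambda>t. h (\<theta> + t *\<^sub>R x)) t :> (gh (\<theta> + t *\<^sub>R x) \<bullet> x)"
proof -
  have d1: "((\<lambda>t. \<theta> + t *\<^sub>R x) has_derivative (\<lambda>s. s *\<^sub>R x)) (at t)"
    by (auto intro!: derivative_eq_intros)
  have d2: "(h has_derivative (\<lambda>v. v \<bullet> gh (\<theta> + t *\<^sub>R x))) (at (\<theta> + t *\<^sub>R x))"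
    using g unfolding gderiv_def by blast
  have "((\<lambda>t. h (\<theta> + t *\<^sub>R x)) has_derivative (\<lambda>s. (s *\<^sub>R x) \<bullet> gh (\<theta> + t *\<^sub>R x))) (at t)"
    using has_derivative_compose[OF d1 d2] by (simp add: o_def)
  then show ?thesis
    unfolding has_field_derivative_def
    by (rule has_derivative_subst) (auto simp: inner_commute fun_eq_iff)
qed

lemma sym_taylor:
  fixes h :: "'a::real_inner \<Rightarrow> real"
  assumes g: "\<And>y. GDERIV h y :> gh y"
    and lip: "\<And>y z. norm (gh y - gh z) \<le> L * norm (y - z)"
  shows "\<bar>h (\<theta> + x) - h (\<theta> - x) - 2 * (gh \<theta> \<bullet> x)\<bar> \<le> L * (norm x)\<^sup>2"
proof -
  define K where "K = L * (norm x)\<^sup>2"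
  define \<psi> where "\<psi> t = h (\<theta> + t *\<^sub>R x) - h (\<theta> + (-t) *\<^sub>R x) - 2 * t * (gh \<theta> \<bullet> x)" for t
  define \<psi>' where "\<psi>' t = gh (\<theta> + t *\<^sub>R x) \<bullet> x + gh (\<theta> + (-t) *\<^sub>R x) \<bullet> x - 2 * (gh \<theta> \<bullet> x)" for t
  have dpsi: "DERIV \<psi> t :> \<psi>' t" for t
  proof -
    have a: "DERIV (\<lambda>t. h (\<theta> + t *\<^sub>R x)) t :> (gh (\<theta> + t *\<^sub>R x) \<bullet> x)" by (rule line_deriv[OF g])
    have b0: "DERIV (\<lambda>t. h (\<theta> + t *\<^sub>R x)) (-t) :> (gh (\<theta> + (-t) *\<^sub>R x) \<bullet> x)" by (rule line_deriv[OF g])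
    have b: "DERIV (\<lambda>t. h (\<theta> + (-t) *\<^sub>R x)) t :> (gh (\<theta> + (-t) *\<^sub>R x) \<bullet> x) * (-1)"
    proof -
      have u: "DERIV (\<lambda>t::real. - t) t :> -1" by (auto intro!: derivative_eq_intros)
      show ?thesis using DERIV_chain2[where f="\<lambda>t. h (\<theta> + t *\<^sub>R x)", OF b0 u] by simp
    qed
    show ?thesis unfolding \<psi>_def \<psi>'_def
      by (rule derivative_eq_intros a b | simp)+
  qed
  have bnd: "\<bar>\<psi>' t\<bar> \<le> 2 * K * \<bar>t\<bar>" for t
  proof -
    have "\<bar>(gh (\<theta> + t *\<^sub>R x) - gh \<theta>) \<bullet> x\<bar> \<le> norm (gh (\<theta> + t *\<^sub>R x) - gh \<theta>) * norm x"
      by (rule Cauchy_Schwarz_ineq2)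
    also have "\<dots> \<le> L * norm (t *\<^sub>R x) * norm x"
      using lip[of "\<theta> + t *\<^sub>R x" \<theta>] by (intro mult_right_mono) auto
    finally have 1: "\<bar>(gh (\<theta> + t *\<^sub>R x) - gh \<theta>) \<bullet> x\<bar> \<le> K * \<bar>t\<bar>"
      by (simp add: K_def power2_eq_square mult_ac)
    have "\<bar>(gh (\<theta> + (-t) *\<^sub>R x) - gh \<theta>) \<bullet> x\<bar> \<le> norm (gh (\<theta> + (-t) *\<^sub>R x) - gh \<theta>) * norm x"
      by (rule Cauchy_Schwarz_ineq2)
    also have "\<dots> \<le> L * norm ((-t) *\<^sub>R x) * norm x"
      using lip[of "\<theta> + (-t) *\<^sub>R x" \<theta>] by (intro mult_right_mono) auto
    finally have 2: "\<bar>(gh (\<theta> + (-t) *\<^sub>R x) - gh \<theta>) \<bullet> x\<bar> \<le> K * \<bar>t\<bar>"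
      by (simp add: K_def power2_eq_square mult_ac)
    have "\<psi>' t = (gh (\<theta> + t *\<^sub>R x) - gh \<theta>) \<bullet> x + (gh (\<theta> + (-t) *\<^sub>R x) - gh \<theta>) \<bullet> x"
      by (simp add: \<psi>'_def inner_diff_left)
    then show ?thesis using 1 2 by linarith
  qed
  have d1: "DERIV (\<lambda>t. \<psi> t - K * t\<^sup>2) t :> \<psi>' t - K * (2 * t)" for t
    using dpsi[of t] by (auto intro!: derivative_eq_intros)
  have d2: "DERIV (\<lambda>t. \<psi> t + K * t\<^sup>2) t :> \<psi>' t + K * (2 * t)" for t
    using dpsi[of t] by (auto intro!: derivative_eq_intros)
  obtain z1 where z1: "0 < z1" "z1 < 1" "(\<psi> 1 - K * 1\<^sup>2) - (\<psi> 0 - K * 0\<^sup>2) = (1 - 0) * (\<psi>' z1 - K * (2 * z1))"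
    using MVT2[of 0 1 "\<lambda>t. \<psi> t - K * t\<^sup>2" "\<lambda>t. \<psi>' t - K * (2 * t)", OF _ d1] by auto
  obtain z2 where z2: "0 < z2" "z2 < 1" "(\<psi> 1 + K * 1\<^sup>2) - (\<psi> 0 + K * 0\<^sup>2) = (1 - 0) * (\<psi>' z2 + K * (2 * z2))"
    using MVT2[of 0 1 "\<lambda>t. \<psi> t + K * t\<^sup>2" "\<lambda>t. \<psi>' t + K * (2 * t)", OF _ d2] by auto
  have p0: "\<psi> 0 = 0" by (simp add: \<psi>_def)
  have "\<psi>' z1 \<le> 2 * K * z1" using bnd[of z1] z1 by (simp add: abs_le_iff)
  moreover have "- \<psi>' z2 \<le> 2 * K * z2" using bnd[of z2] z2 by (simp add: abs_le_iff)
  ultimately have "\<bar>\<psi> 1\<bar> \<le> K" using z1(3) z2(3) p0 by (simp add: abs_le_iff)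
  then show ?thesis by (simp add: \<psi>_def K_def algebra_simps)
qed



lemma batch_var:
  fixes X :: "'i \<Rightarrow> real" and p :: "'i pmf" and B :: nat
  assumes int2: "integrable (measure_pmf p) (\<lambda>i. (X i)\<^sup>2)"
    and mean0: "(\<integral>i. X i \<partial>measure_pmf p) = 0"
  shows "(\<integral>\<^sup>+b. ennreal ((\<Sum>j<B. X (b j))\<^sup>2) \<partial>measure_pmf (Pi_pmf {..<B} d (\<lambda>_. p)))
         = ennreal (real B * (\<integral>i. (X i)\<^sup>2 \<partial>measure_pmf p))"
proof -
  define P where "P = Pi_pmf {..<B} d (\<lambda>_. p)"
  have int1: "integrable (measure_pmf p) X"
    by (rule measure_pmf.square_integrable_imp_integrable[OF _ int2]) simp
  have comp: "map_pmf (\<lambda>f. f j) P = p" if "j < B" for j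
    using Pi_pmf_component[of "{..<B}" j d "\<lambda>_. p"] that by (simp add: P_def)
  have intY: "integrable (measure_pmf P) (\<lambda>f. X (f j))" if "j < B" for j
    using int1 comp[OF that] integrable_map_pmf_eq[of "\<lambda>f. f j" P X] by simp
  have intY2: "integrable (measure_pmf P) (\<lambda>f. (X (f j))\<^sup>2)" if "j < B" for j
    using int2 comp[OF that] integrable_map_pmf_eq[of "\<lambda>f. f j" P "\<lambda>i. (X i)\<^sup>2"] by simp
  have EY2: "(\<integral>f. (X (f j))\<^sup>2 \<partial>measure_pmf P) = (\<integral>i. (X i)\<^sup>2 \<partial>measure_pmf p)" if "j < B" for j
    using integral_map_pmf[of "\<lambda>f. f j" P "\<lambda>i. (X i)\<^sup>2"] comp[OF that] by simp
  have ind: "prob_space.indep_vars (measure_pmf P) (\<lambda>_. borel) (\<lambda>j f. X (f j)) {..<B}"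
    using prob_space.indep_vars_compose2[OF measure_pmf.prob_space_axioms indep_vars_Pi_pmf[of "{..<B}" d "\<lambda>_. p"],
        of "\<lambda>_ i. X i" "\<lambda>_. borel"]
    by (simp add: P_def)
  have cross: "integrable (measure_pmf P) (\<lambda>f. X (f j) * X (f k)) \<and> (\<integral>f. X (f j) * X (f k) \<partial>measure_pmf P) = 0"
    if "j < B" "k < B" "j \<noteq> k" for j k
  proof -
    have ind2: "prob_space.indep_vars (measure_pmf P) (\<lambda>_. borel) (\<lambda>j f. X (f j)) {j, k}"
      using prob_space.indep_vars_subset[OF measure_pmf.prob_space_axioms ind] that by auto
    have i2: "\<And>l. l \<in> {j,k} \<Longrightarrow> integrable (measure_pmf P) (\<lambda>f. X (f l))" using intY that by auto
    have "integrable (measure_pmf P) (\<lambda>f. \<Prod>l\<in>{j,k}. X (f l))"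
      by (rule prob_space.indep_vars_integrable[OF measure_pmf.prob_space_axioms _ ind2 i2]) auto
    moreover have "(\<integral>f. (\<Prod>l\<in>{j,k}. X (f l)) \<partial>measure_pmf P) = (\<Prod>l\<in>{j,k}. \<integral>f. X (f l) \<partial>measure_pmf P)"
      by (rule prob_space.indep_vars_lebesgue_integral[OF measure_pmf.prob_space_axioms _ ind2 i2]) auto
    moreover have "(\<integral>f. X (f j) \<partial>measure_pmf P) = 0"
      using integral_map_pmf[of "\<lambda>f. f j" P X] comp[OF that(1)] mean0 by simp
    ultimately show ?thesis using that by simp
  qed
  have intjk: "integrable (measure_pmf P) (\<lambda>f. X (f j) * X (f k))" if "j < B" "k < B" for j k
    using cross[OF that] intY2[OF that(1)] by (cases "j = k") (auto simp: power2_eq_square)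
  have sq: "(\<Sum>j<B. X (f j))\<^sup>2 = (\<Sum>j<B. \<Sum>k<B. X (f j) * X (f k))" for f
    by (simp add: power2_eq_square sum_product)
  have intS: "integrable (measure_pmf P) (\<lambda>f. (\<Sum>j<B. X (f j))\<^sup>2)"
    unfolding sq by (auto intro!: Bochner_Integration.integrable_sum intjk)
  have "(\<integral>f. (\<Sum>j<B. X (f j))\<^sup>2 \<partial>measure_pmf P) = (\<Sum>j<B. \<Sum>k<B. \<integral>f. X (f j) * X (f k) \<partial>measure_pmf P)"
    unfolding sq by (subst Bochner_Integration.integral_sum, (auto intro!: Bochner_Integration.integrable_sum intjk)) (intro sum.cong refl Bochner_Integration.integral_sum, auto intro: intjk)
  also have "\<dots> = (\<Sum>j<B. \<integral>i. (X i)\<^sup>2 \<partial>measure_pmf p)"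
  proof (intro sum.cong refl)
    fix j assume j: "j \<in> {..<B}"
    have "(\<Sum>k<B. \<integral>f. X (f j) * X (f k) \<partial>measure_pmf P) = (\<Sum>k\<in>{j}. \<integral>f. X (f j) * X (f k) \<partial>measure_pmf P)"
      using j cross by (intro sum.mono_neutral_right) auto
    also have "\<dots> = (\<integral>i. (X i)\<^sup>2 \<partial>measure_pmf p)"
      using EY2[of j] j by (simp add: power2_eq_square)
    finally show "(\<Sum>k<B. \<integral>f. X (f j) * X (f k) \<partial>measure_pmf P) = (\<integral>i. (X i)\<^sup>2 \<partial>measure_pmf p)" .
  qed
  also have "\<dots> = real B * (\<integral>i. (X i)\<^sup>2 \<partial>measure_pmf p)" by simp
  finally have E: "(\<integral>f. (\<Sum>j<B. X (f j))\<^sup>2 \<partial>measure_pmf P) = real B * (\<integral>i. (X i)\<^sup>2 \<partial>measure_pmf p)" .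
  have "(\<integral>\<^sup>+b. ennreal ((\<Sum>j<B. X (b j))\<^sup>2) \<partial>measure_pmf P) = ennreal (\<integral>f. (\<Sum>j<B. X (f j))\<^sup>2 \<partial>measure_pmf P)"
    by (rule nn_integral_eq_integral[OF intS]) simp
  then show ?thesis using E by (simp add: P_def)
qed



lemma nn_integral_pmf_support:
  "(\<integral>\<^sup>+b. g b \<partial>measure_pmf q) = (\<integral>\<^sup>+b. ennreal (pmf q b) * g b \<partial>count_space (set_pmf q))"
  unfolding nn_integral_measure_pmf
  by (subst nn_integral_count_space_indicator) (auto intro!: nn_integral_cong simp: indicator_def set_pmf_eq)

lemma pmf_nn_integral_measurable:
  fixes f :: "'a \<Rightarrow> 'b \<Rightarrow> ennreal"
  assumes f: "\<And>b. (\<lambda>x. f x b) \<in> borel_measurable N"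
  shows "(\<lambda>x. \<integral>\<^sup>+b. f x b \<partial>measure_pmf q) \<in> borel_measurable N"
proof -
  interpret S: sigma_finite_measure "count_space (set_pmf q)"
    by (rule sigma_finite_measure_count_space_countable) simp
  have "(\<lambda>(b, x). ennreal (pmf q b) * f x b) \<in> borel_measurable (count_space (set_pmf q) \<Otimes>\<^sub>M N)"
    by (rule measurable_pair_measure_countable1) (simp_all add: f borel_measurable_times_ennreal)
  then have "(\<lambda>(x, b). ennreal (pmf q b) * f x b) \<in> borel_measurable (N \<Otimes>\<^sub>M count_space (set_pmf q))"
    using measurable_pair_swap[of "\<lambda>(b, x). ennreal (pmf q b) * f x b"] by (simp add: case_prod_beta')
  then have "(\<lambda>x. \<integral>\<^sup>+b. ennreal (pmf q b) * f x b \<partial>count_space (set_pmf q)) \<in> borel_measurable N"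
    using S.borel_measurable_nn_integral[of "\<lambda>x b. ennreal (pmf q b) * f x b" N] by simp
  then show ?thesis by (simp add: nn_integral_pmf_support)
qed

lemma pmf_tonelli:
  fixes f :: "'a \<Rightarrow> 'b \<Rightarrow> ennreal"
  assumes f: "\<And>b. (\<lambda>x. f x b) \<in> borel_measurable N"
  shows "(\<integral>\<^sup>+x. \<integral>\<^sup>+b. f x b \<partial>measure_pmf q \<partial>N) = (\<integral>\<^sup>+b. \<integral>\<^sup>+x. f x b \<partial>N \<partial>measure_pmf q)"
proof -
  have "(\<integral>\<^sup>+x. \<integral>\<^sup>+b. f x b \<partial>measure_pmf q \<partial>N) = (\<integral>\<^sup>+x. \<integral>\<^sup>+b. ennreal (pmf q b) * f x b \<partial>count_space (set_pmf q) \<partial>N)"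
    by (simp add: nn_integral_pmf_support)
  also have "\<dots> = (\<integral>\<^sup>+b. \<integral>\<^sup>+x. ennreal (pmf q b) * f x b \<partial>N \<partial>count_space (set_pmf q))"
    by (rule nn_integral_count_space_nn_integral) (simp_all add: f borel_measurable_times_ennreal)
  also have "\<dots> = (\<integral>\<^sup>+b. ennreal (pmf q b) * \<integral>\<^sup>+x. f x b \<partial>N \<partial>count_space (set_pmf q))"
    by (intro nn_integral_cong nn_integral_cmult) (auto intro!: f)
  also have "\<dots> = (\<integral>\<^sup>+b. \<integral>\<^sup>+x. f x b \<partial>N \<partial>measure_pmf q)"
    by (simp add: nn_integral_pmf_support)
  finally show ?thesis .
qed




lemma batch_gderiv:
  assumes grad_i: "\<And>i x. GDERIV (loss i) x :> gl i x"
  shows "GDERIV (batch_loss loss B b) y :> (1 / real B) *\<^sub>R (\<Sum>j<B. gl (b j) y)"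
proof -
  have "((\<lambda>y. (\<Sum>j<B. loss (b j) y)) has_derivative (\<lambda>h. (\<Sum>j<B. h \<bullet> gl (b j) y))) (at y)"
    by (rule has_derivative_sum) (use grad_i in \<open>auto simp: gderiv_def\<close>)
  then have "((\<lambda>y. (1 / real B) * (\<Sum>j<B. loss (b j) y)) has_derivative (\<lambda>h. (1 / real B) * (\<Sum>j<B. h \<bullet> gl (b j) y))) (at y)"
    by (rule has_derivative_mult_right)
  then show ?thesis
    unfolding gderiv_def batch_loss_def by (simp add: inner_sum_right)
qed

lemma batch_lip:
  assumes smooth: "\<And>i x y. norm (gl i x - gl i y) \<le> Lsm * norm (x - y)" and B: "B \<ge> 1"
  shows "norm ((1 / real B) *\<^sub>R (\<Sum>j<B. gl (b j) y) - (1 / real B) *\<^sub>R (\<Sum>j<B. gl (b j) z)) \<le> Lsm * norm (y - z)"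
proof -
  have "norm ((1 / real B) *\<^sub>R (\<Sum>j<B. gl (b j) y) - (1 / real B) *\<^sub>R (\<Sum>j<B. gl (b j) z))
      = (1 / real B) * norm (\<Sum>j<B. gl (b j) y - gl (b j) z)"
    by (simp add: scaleR_diff_right[symmetric] sum_subtractf)
  also have "\<dots> \<le> (1 / real B) * (\<Sum>j<B. Lsm * norm (y - z))"
    by (intro mult_left_mono order.trans[OF norm_sum sum_mono] smooth) auto
  also have "\<dots> = Lsm * norm (y - z)" using B by simp
  finally show ?thesis .
qed

lemma sq_split:
  fixes D a c E :: real
  assumes "\<bar>D - a - c\<bar> \<le> E"
  shows "D\<^sup>2 \<le> 4 * a\<^sup>2 + 4 * c\<^sup>2 + 2 * E\<^sup>2"
proof -
  define e where "e = D - a - c"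
  have D: "D = a + c + e" by (simp add: e_def)
  have "e\<^sup>2 \<le> E\<^sup>2" using assms by (simp add: e_def abs_le_square_iff[symmetric] power2_le_iff_abs_le abs_le_iff) 
  moreover have "D\<^sup>2 \<le> 2 * (a + c)\<^sup>2 + 2 * e\<^sup>2"
  proof -
    have "D\<^sup>2 = 2 * (a + c)\<^sup>2 + 2 * e\<^sup>2 - (a + c - e)\<^sup>2" unfolding D by algebra
    then show ?thesis by (simp add: zero_le_power2)
  qed
  moreover have "(a + c)\<^sup>2 \<le> 2 * a\<^sup>2 + 2 * c\<^sup>2"
  proof -
    have "(a + c)\<^sup>2 = 2 * a\<^sup>2 + 2 * c\<^sup>2 - (a - c)\<^sup>2" by algebra
    then show ?thesis by (simp add: zero_le_power2)
  qed
  ultimately show ?thesis by linarith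
qed



lemma zo_pointwise:
  fixes loss :: "'i \<Rightarrow> real^'d \<Rightarrow> real" and gl :: "'i \<Rightarrow> real^'d \<Rightarrow> real^'d" and gz :: "real^'d"
  assumes grad_i: "\<And>i x. GDERIV (loss i) x :> gl i x"
    and smooth: "\<And>i x y. norm (gl i x - gl i y) \<le> Lsm * norm (x - y)"
    and B: "B \<ge> 1" and mu: "\<mu> > 0"
  shows "(norm (zo_est loss B \<mu> M \<theta> u b))\<^sup>2 \<le>
          4 * (gz \<bullet> (M *v u))\<^sup>2 * (norm (M *v u))\<^sup>2
        + 4 * (((1 / real B) *\<^sub>R (\<Sum>j<B. gl (b j) \<theta> - gz)) \<bullet> (M *v u))\<^sup>2 * (norm (M *v u))\<^sup>2
        + Lsm\<^sup>2 * \<mu>\<^sup>2 / 2 * (norm (M *v u))^6"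
proof -
  define v where "v = M *v u"
  define h where "h = batch_loss loss B b"
  define gh where "gh y = (1 / real B) *\<^sub>R (\<Sum>j<B. gl (b j) y)" for y
  define D where "D = (h (\<theta> + \<mu> *\<^sub>R v) - h (\<theta> - \<mu> *\<^sub>R v)) / (2 * \<mu>)"
  define \<Delta> where "\<Delta> = (1 / real B) *\<^sub>R (\<Sum>j<B. gl (b j) \<theta> - gz)"
  have zo: "zo_est loss B \<mu> M \<theta> u b = D *\<^sub>R v"
    by (simp add: zo_est_def D_def h_def v_def)
  have T: "\<bar>h (\<theta> + \<mu> *\<^sub>R v) - h (\<theta> - \<mu> *\<^sub>R v) - 2 * (gh \<theta> \<bullet> (\<mu> *\<^sub>R v))\<bar> \<le> Lsm * (norm (\<mu> *\<^sub>R v))\<^sup>2"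
    by (rule sym_taylor) (unfold h_def gh_def, rule batch_gderiv[OF grad_i], rule batch_lip[OF smooth B])
  have T2: "\<bar>D - gh \<theta> \<bullet> v\<bar> \<le> Lsm * \<mu> * (norm v)\<^sup>2 / 2"
  proof -
    have "D - gh \<theta> \<bullet> v = (h (\<theta> + \<mu> *\<^sub>R v) - h (\<theta> - \<mu> *\<^sub>R v) - 2 * (gh \<theta> \<bullet> (\<mu> *\<^sub>R v))) / (2 * \<mu>)"
      using mu by (simp add: D_def field_simps)
    then have "\<bar>D - gh \<theta> \<bullet> v\<bar> = \<bar>h (\<theta> + \<mu> *\<^sub>R v) - h (\<theta> - \<mu> *\<^sub>R v) - 2 * (gh \<theta> \<bullet> (\<mu> *\<^sub>R v))\<bar> / (2 * \<mu>)"
      using mu by simp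
    also have "\<dots> \<le> Lsm * (norm (\<mu> *\<^sub>R v))\<^sup>2 / (2 * \<mu>)"
      using T mu by (intro divide_right_mono) auto
    also have "\<dots> = Lsm * \<mu> * (norm v)\<^sup>2 / 2"
      using mu by (simp add: power2_eq_square field_simps)
    finally show ?thesis .
  qed
  have ghs: "gh \<theta> = gz + \<Delta>"
  proof -
    have "\<Delta> = (1 / real B) *\<^sub>R (\<Sum>j<B. gl (b j) \<theta>) - (1 / real B) *\<^sub>R (\<Sum>j<B. gz)"
      by (simp add: \<Delta>_def sum_subtractf scaleR_diff_right)
    also have "(1 / real B) *\<^sub>R (\<Sum>j<B. gz) = gz" using B by (simp only: sum_constant_scaleR card_lessThan) simp
    finally show ?thesis by (simp add: gh_def)
  qed
  have "\<bar>D - gz \<bullet> v - \<Delta> \<bullet> v\<bar> \<le> Lsm * \<mu> * (norm v)\<^sup>2 / 2"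
    using T2 by (simp add: ghs inner_add_left algebra_simps)
  from sq_split[OF this]
  have D2: "D\<^sup>2 \<le> 4 * (gz \<bullet> v)\<^sup>2 + 4 * (\<Delta> \<bullet> v)\<^sup>2 + 2 * (Lsm * \<mu> * (norm v)\<^sup>2 / 2)\<^sup>2" .
  have "(norm (zo_est loss B \<mu> M \<theta> u b))\<^sup>2 = D\<^sup>2 * (norm v)\<^sup>2"
    by (simp add: zo power_mult_distrib)
  also have "\<dots> \<le> (4 * (gz \<bullet> v)\<^sup>2 + 4 * (\<Delta> \<bullet> v)\<^sup>2 + 2 * (Lsm * \<mu> * (norm v)\<^sup>2 / 2)\<^sup>2) * (norm v)\<^sup>2"
    using D2 by (intro mult_right_mono) auto
  also have "\<dots> = 4 * (gz \<bullet> v)\<^sup>2 * (norm v)\<^sup>2 + 4 * (\<Delta> \<bullet> v)\<^sup>2 * (norm v)\<^sup>2 + Lsm\<^sup>2 * \<mu>\<^sup>2 / 2 * (norm v)^6"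
    by (simp add: power_mult_distrib algebra_simps eval_nat_numeral)
  finally show ?thesis by (simp add: v_def \<Delta>_def)
qed



lemma jensen2:
  fixes f :: "'a \<Rightarrow> 'b \<Rightarrow> real"
  assumes N: "prob_space N" and meas: "\<And>b. (\<lambda>u. f u b) \<in> borel_measurable N" and nn: "\<And>u b. f u b \<ge> 0"
  shows "(\<integral>\<^sup>+u. \<integral>\<^sup>+b. ennreal (f u b) \<partial>measure_pmf q \<partial>N)\<^sup>2 \<le> (\<integral>\<^sup>+u. \<integral>\<^sup>+b. ennreal ((f u b)\<^sup>2) \<partial>measure_pmf q \<partial>N)"
proof -
  define F where "F u = (\<integral>\<^sup>+b. ennreal (f u b) \<partial>measure_pmf q)" for u
  have Fm: "F \<in> borel_measurable N"
    unfolding F_def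
    by (rule pmf_nn_integral_measurable, rule measurable_compose[OF meas measurable_ennreal])
  have inner: "(F u)\<^sup>2 \<le> (\<integral>\<^sup>+b. ennreal ((f u b)\<^sup>2) \<partial>measure_pmf q)" for u
  proof -
    have "(\<integral>\<^sup>+b. ennreal (f u b) * 1 \<partial>measure_pmf q)\<^sup>2 \<le> (\<integral>\<^sup>+b. ennreal (f u b) ^ 2 \<partial>measure_pmf q) * (\<integral>\<^sup>+b. 1 ^ 2 \<partial>measure_pmf q)"
      by (rule Cauchy_Schwarz_nn_integral) simp_all
    then show ?thesis
      using nn by (simp add: F_def ennreal_power measure_pmf.emeasure_space_1)
  qed
  have "(\<integral>\<^sup>+u. F u * 1 \<partial>N)\<^sup>2 \<le> (\<integral>\<^sup>+u. F u ^ 2 \<partial>N) * (\<integral>\<^sup>+u. 1 ^ 2 \<partial>N)"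
    by (rule Cauchy_Schwarz_nn_integral) (simp_all add: Fm)
  also have "(\<integral>\<^sup>+u. 1 ^ 2 \<partial>N) = 1"
    using prob_space.emeasure_space_1[OF N] by simp
  also have "(\<integral>\<^sup>+u. F u ^ 2 \<partial>N) \<le> (\<integral>\<^sup>+u. \<integral>\<^sup>+b. ennreal ((f u b)\<^sup>2) \<partial>measure_pmf q \<partial>N)"
    by (intro nn_integral_mono inner)
  finally show ?thesis by (simp add: F_def)
qed

lemma batch_term:
  fixes gl :: "'i \<Rightarrow> real^'d \<Rightarrow> real^'d" and p :: "'i pmf" and v g0 :: "real^'d"
  assumes int: "integrable (measure_pmf p) (\<lambda>i. gl i \<theta>)"
    and mean: "measure_pmf.expectation p (\<lambda>i. gl i \<theta>) = g0"
    and var: "(\<integral>\<^sup>+ i. ennreal ((norm (g0 - gl i \<theta>))\<^sup>2) \<partial>measure_pmf p) \<le> ennreal (\<sigma>\<^sup>2)"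
    and B: "B \<ge> 1"
  shows "(\<integral>\<^sup>+b. ennreal ((((1 / real B) *\<^sub>R (\<Sum>j<B. gl (b j) \<theta> - g0)) \<bullet> v)\<^sup>2) \<partial>measure_pmf (Pi_pmf {..<B} d (\<lambda>_. p)))
       = ennreal (1 / real B) * (\<integral>\<^sup>+i. ennreal (((gl i \<theta> - g0) \<bullet> v)\<^sup>2) \<partial>measure_pmf p)"
proof -
  define X where "X i = (gl i \<theta> - g0) \<bullet> v" for i
  have bnd: "(X i)\<^sup>2 \<le> (norm (g0 - gl i \<theta>))\<^sup>2 * (norm v)\<^sup>2" for i
  proof -
    have "\<bar>X i\<bar> \<le> norm (g0 - gl i \<theta>) * norm v"
      unfolding X_def using Cauchy_Schwarz_ineq2[of "gl i \<theta> - g0" v] by (simp add: norm_minus_commute)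
    then show ?thesis
      by (metis abs_ge_zero power2_abs power_mono power_mult_distrib)
  qed
  have fin: "(\<integral>\<^sup>+i. ennreal (norm ((X i)\<^sup>2)) \<partial>measure_pmf p) < \<infinity>"
  proof -
    have "(\<integral>\<^sup>+i. ennreal (norm ((X i)\<^sup>2)) \<partial>measure_pmf p) \<le> (\<integral>\<^sup>+i. ennreal ((norm v)\<^sup>2) * ennreal ((norm (g0 - gl i \<theta>))\<^sup>2) \<partial>measure_pmf p)"
      using bnd by (intro nn_integral_mono) (simp add: ennreal_mult'[symmetric] mult.commute ennreal_leI)
    also have "\<dots> = ennreal ((norm v)\<^sup>2) * (\<integral>\<^sup>+i. ennreal ((norm (g0 - gl i \<theta>))\<^sup>2) \<partial>measure_pmf p)"
      by (rule nn_integral_cmult) simp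
    also have "\<dots> \<le> ennreal ((norm v)\<^sup>2) * ennreal (\<sigma>\<^sup>2)"
      by (intro mult_left_mono var) simp
    also have "\<dots> < \<infinity>" by (simp add: ennreal_mult_less_top)
    finally show ?thesis .
  qed
  have int2: "integrable (measure_pmf p) (\<lambda>i. (X i)\<^sup>2)"
    by (rule integrableI_bounded) (use fin in simp_all)
  have mean0: "(\<integral>i. X i \<partial>measure_pmf p) = 0"
  proof -
    have "(\<integral>i. X i \<partial>measure_pmf p) = (\<integral>i. (gl i \<theta> - g0) \<partial>measure_pmf p) \<bullet> v"
      unfolding X_def using int by (intro integral_inner_left) auto
    also have "(\<integral>i. (gl i \<theta> - g0) \<partial>measure_pmf p) = 0"
      using int mean by (simp add: Bochner_Integration.integral_diff)
    finally show ?thesis by simp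
  qed
  have "(\<integral>\<^sup>+b. ennreal ((((1 / real B) *\<^sub>R (\<Sum>j<B. gl (b j) \<theta> - g0)) \<bullet> v)\<^sup>2) \<partial>measure_pmf (Pi_pmf {..<B} d (\<lambda>_. p)))
      = (\<integral>\<^sup>+b. ennreal ((1 / real B)\<^sup>2) * ennreal ((\<Sum>j<B. X (b j))\<^sup>2) \<partial>measure_pmf (Pi_pmf {..<B} d (\<lambda>_. p)))"
    by (intro nn_integral_cong) (simp add: X_def inner_sum_left power_mult_distrib ennreal_mult'[symmetric] power_divide)
  also have "\<dots> = ennreal ((1 / real B)\<^sup>2) * ennreal (real B * (\<integral>i. (X i)\<^sup>2 \<partial>measure_pmf p))"
    by (subst nn_integral_cmult) (simp_all add: batch_var[OF int2 mean0])
  also have "\<dots> = ennreal (1 / real B) * ennreal (\<integral>i. (X i)\<^sup>2 \<partial>measure_pmf p)"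
    using B by (simp add: ennreal_mult'[symmetric] power2_eq_square)
  also have "ennreal (\<integral>i. (X i)\<^sup>2 \<partial>measure_pmf p) = (\<integral>\<^sup>+i. ennreal ((X i)\<^sup>2) \<partial>measure_pmf p)"
    by (rule nn_integral_eq_integral[OF int2, symmetric]) simp
  finally show ?thesis by (simp add: X_def)
qed



lemma meas_G: "f \<in> borel_measurable borel \<Longrightarrow> f \<in> borel_measurable (std_gauss_vec :: (real^'d) measure)"
  by (simp add: measurable_cong_sets[OF sets_gauss refl])

lemma Mv_meas[measurable]: "(\<lambda>u. (M::real^'d^'e) *v u) \<in> borel_measurable borel"
  by (intro borel_measurable_continuous_onI linear_continuous_on matrix_vector_mul_bounded_linear)

theorem mainTheorem9:
  fixes loss :: "'i \<Rightarrow> real^'d \<Rightarrow> real"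
    and gl :: "'i \<Rightarrow> real^'d \<Rightarrow> real^'d"
    and Lf :: "real^'d \<Rightarrow> real"
    and gL :: "real^'d \<Rightarrow> real^'d"
    and p :: "'i pmf"
    and Lsm \<sigma> G \<mu> s :: real
    and B :: nat
    and M :: "real^'d^'d"
    and \<theta> :: "real^'d"
  assumes grad_i: "\<And>i x. GDERIV (loss i) x :> gl i x"
    and smooth: "\<And>i x y. norm (gl i x - gl i y) \<le> Lsm * norm (x - y)"
    and grad_L: "\<And>x. GDERIV Lf x :> gL x"
    and unbiased_int: "\<And>x. integrable (measure_pmf p) (\<lambda>i. gl i x)"
    and unbiased: "\<And>x. measure_pmf.expectation p (\<lambda>i. gl i x) = gL x"
    and var: "\<And>x. (\<integral>\<^sup>+ i. ennreal ((norm (gL x - gl i x))\<^sup>2) \<partial>measure_pmf p) \<le> ennreal (\<sigma>\<^sup>2)"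
    and bdd: "\<And>x. norm (gL x) \<le> G"
    and B_pos: "B \<ge> 1"
    and mu_pos: "\<mu> > 0"
    and M_sym: "transpose M = M"
    and M_psd: "\<And>x. x \<bullet> (M *v x) \<ge> 0"
    and M_smax: "sigma_max M = 1"
    and M_srank: "srank M \<le> s"
  shows "(\<integral>\<^sup>+ u. \<integral>\<^sup>+ b. ennreal (norm (zo_est loss B \<mu> M \<theta> u b))
              \<partial>measure_pmf (Pi_pmf {..<B} undefined (\<lambda>_. p)) \<partial>std_gauss_vec)\<^sup>2
         \<le> (\<integral>\<^sup>+ u. \<integral>\<^sup>+ b. ennreal ((norm (zo_est loss B \<mu> M \<theta> u b))\<^sup>2)
              \<partial>measure_pmf (Pi_pmf {..<B} undefined (\<lambda>_. p)) \<partial>std_gauss_vec)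
       \<and> (\<integral>\<^sup>+ u. \<integral>\<^sup>+ b. ennreal ((norm (zo_est loss B \<mu> M \<theta> u b))\<^sup>2)
              \<partial>measure_pmf (Pi_pmf {..<B} undefined (\<lambda>_. p)) \<partial>std_gauss_vec)
         \<le> ennreal (15 * \<mu>\<^sup>2 * Lsm\<^sup>2 * s ^ 3 / 2
                    + 4 * (s + 2) * ((norm (gL \<theta>))\<^sup>2 + \<sigma>\<^sup>2 / real B))"
proof -
  let ?P = "measure_pmf (Pi_pmf {..<B} undefined (\<lambda>_. p))"
  let ?G = "std_gauss_vec :: (real^'d) measure"
  interpret GS: prob_space ?G by (rule prob_space_gauss)
  define S where "S = sum_sq_singular M"
  have S_le: "S \<le> s" unfolding S_def by (rule frob_le_s[OF M_smax M_srank])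
  have S_nn: "0 \<le> S" unfolding S_def sum_sq_singular_def by (intro sum_nonneg) auto
  have nb: "\<And>x. norm (M *v x) \<le> norm x" by (rule onorm_le1[OF M_smax])
  have cont_loss: "continuous_on UNIV (loss i)" for i
    using grad_i unfolding gderiv_def
    by (intro continuous_at_imp_continuous_on ballI has_derivative_continuous) blast
  have zo_cont: "continuous_on UNIV (\<lambda>u. zo_est loss B \<mu> M \<theta> u b)" for b
  proof -
    have cb: "continuous_on UNIV (batch_loss loss B b)"
      unfolding batch_loss_def by (intro continuous_on_mult_left continuous_on_sum cont_loss)
    have cM: "continuous_on UNIV (\<lambda>u. M *v u)"
      by (rule linear_continuous_on) simp
    have c1: "continuous_on UNIV (\<lambda>u. batch_loss loss B b (\<theta> + \<mu> *\<^sub>R (M *v u)))"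
      by (rule continuous_on_compose2[OF cb]) (rule continuous_on_add continuous_on_const continuous_on_scaleR cM | simp)+
    have c2: "continuous_on UNIV (\<lambda>u. batch_loss loss B b (\<theta> - \<mu> *\<^sub>R (M *v u)))"
      by (rule continuous_on_compose2[OF cb]) (rule continuous_on_diff continuous_on_const continuous_on_scaleR cM | simp)+
    have "continuous_on UNIV (\<lambda>u. ((batch_loss loss B b (\<theta> + \<mu> *\<^sub>R (M *v u)) - batch_loss loss B b (\<theta> - \<mu> *\<^sub>R (M *v u))) / (2 * \<mu>)) *\<^sub>R (M *v u))"
      by (intro continuous_on_scaleR continuous_on_divide continuous_on_diff continuous_on_const c1 c2 cM) (use mu_pos cM in auto)
    then show ?thesis unfolding zo_est_def .
  qed
  have zo_meas: "(\<lambda>u. zo_est loss B \<mu> M \<theta> u b) \<in> borel_measurable ?G" for b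
    using borel_measurable_continuous_onI[OF zo_cont[of b]] by (simp add: measurable_cong_sets[OF sets_gauss refl])
  have part1: "(\<integral>\<^sup>+ u. \<integral>\<^sup>+ b. ennreal (norm (zo_est loss B \<mu> M \<theta> u b)) \<partial>?P \<partial>?G)\<^sup>2
         \<le> (\<integral>\<^sup>+ u. \<integral>\<^sup>+ b. ennreal ((norm (zo_est loss B \<mu> M \<theta> u b))\<^sup>2) \<partial>?P \<partial>?G)"
    by (rule jensen2[OF prob_space_gauss]) (use zo_meas in simp_all)
  have part2: "(\<integral>\<^sup>+ u. \<integral>\<^sup>+ b. ennreal ((norm (zo_est loss B \<mu> M \<theta> u b))\<^sup>2) \<partial>?P \<partial>?G)
         \<le> ennreal (15 * \<mu>\<^sup>2 * Lsm\<^sup>2 * s ^ 3 / 2 + 4 * (s + 2) * ((norm (gL \<theta>))\<^sup>2 + \<sigma>\<^sup>2 / real B))"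
  proof -
  define d where "d i = gl i \<theta> - gL \<theta>" for i
  define A where "A u = 4 * (gL \<theta> \<bullet> (M *v u))\<^sup>2 * (norm (M *v u))\<^sup>2" for u
  define C where "C u = Lsm\<^sup>2 * \<mu>\<^sup>2 / 2 * (norm (M *v u))^6" for u
  define Q where "Q u = (\<integral>\<^sup>+ i. ennreal ((d i \<bullet> (M *v u))\<^sup>2 * (norm (M *v u))\<^sup>2) \<partial>measure_pmf p)" for u
  have A_nn: "A u \<ge> 0" for u by (simp add: A_def)
  have C_nn: "C u \<ge> 0" for u by (simp add: C_def)
  have inner: "(\<integral>\<^sup>+ b. ennreal ((norm (zo_est loss B \<mu> M \<theta> u b))\<^sup>2) \<partial>?P) \<le> ennreal (A u + C u) + ennreal (4 / real B) * Q u" for u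
  proof -
    let ?c = "\<lambda>b. (((1 / real B) *\<^sub>R (\<Sum>j<B. gl (b j) \<theta> - gL \<theta>)) \<bullet> (M *v u))\<^sup>2"
    have "(\<integral>\<^sup>+ b. ennreal ((norm (zo_est loss B \<mu> M \<theta> u b))\<^sup>2) \<partial>?P)
        \<le> (\<integral>\<^sup>+ b. ennreal (A u + C u) + ennreal (4 * (norm (M *v u))\<^sup>2) * ennreal (?c b) \<partial>?P)"
    proof (intro nn_integral_mono)
      fix b
      have "(norm (zo_est loss B \<mu> M \<theta> u b))\<^sup>2 \<le> A u + C u + 4 * (norm (M *v u))\<^sup>2 * ?c b"
        using zo_pointwise[OF grad_i smooth B_pos mu_pos, where gz="gL \<theta>" and M=M and \<theta>=\<theta> and u=u and b=b]
        by (simp add: A_def C_def algebra_simps)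
      then have "ennreal ((norm (zo_est loss B \<mu> M \<theta> u b))\<^sup>2) \<le> ennreal (A u + C u + 4 * (norm (M *v u))\<^sup>2 * ?c b)"
        by (rule ennreal_leI)
      also have "\<dots> = ennreal (A u + C u) + ennreal (4 * (norm (M *v u))\<^sup>2) * ennreal (?c b)"
        using A_nn[of u] C_nn[of u] by (simp add: ennreal_plus ennreal_mult)
      finally show "ennreal ((norm (zo_est loss B \<mu> M \<theta> u b))\<^sup>2) \<le> ennreal (A u + C u) + ennreal (4 * (norm (M *v u))\<^sup>2) * ennreal (?c b)" .
    qed
    also have "\<dots> = ennreal (A u + C u) + ennreal (4 * (norm (M *v u))\<^sup>2) * (\<integral>\<^sup>+ b. ennreal (?c b) \<partial>?P)"
      by (subst nn_integral_add) (simp_all add: nn_integral_cmult measure_pmf.emeasure_space_1)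
    also have "(\<integral>\<^sup>+ b. ennreal (?c b) \<partial>?P) = ennreal (1 / real B) * (\<integral>\<^sup>+i. ennreal (((gl i \<theta> - gL \<theta>) \<bullet> (M *v u))\<^sup>2) \<partial>measure_pmf p)"
      by (rule batch_term[OF unbiased_int unbiased var B_pos])
    also have "ennreal (4 * (norm (M *v u))\<^sup>2) * (ennreal (1 / real B) * (\<integral>\<^sup>+i. ennreal (((gl i \<theta> - gL \<theta>) \<bullet> (M *v u))\<^sup>2) \<partial>measure_pmf p))
       = ennreal (4 / real B) * Q u"
    proof -
      have "ennreal (4 * (norm (M *v u))\<^sup>2) * (ennreal (1 / real B) * (\<integral>\<^sup>+i. ennreal (((gl i \<theta> - gL \<theta>) \<bullet> (M *v u))\<^sup>2) \<partial>measure_pmf p))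
         = ennreal (4 / real B) * (ennreal ((norm (M *v u))\<^sup>2) * (\<integral>\<^sup>+i. ennreal (((gl i \<theta> - gL \<theta>) \<bullet> (M *v u))\<^sup>2) \<partial>measure_pmf p))"
      proof -
        have e: "ennreal (1 / real B) * ennreal (4 * (norm (M *v u))\<^sup>2) = ennreal (4 / real B) * ennreal ((norm (M *v u))\<^sup>2)"
          by (simp add: ennreal_mult[symmetric])
        show ?thesis by (simp only: mult.assoc[symmetric] mult.commute[of "ennreal (4 * _)"] e)
      qed
      also have "ennreal ((norm (M *v u))\<^sup>2) * (\<integral>\<^sup>+i. ennreal (((gl i \<theta> - gL \<theta>) \<bullet> (M *v u))\<^sup>2) \<partial>measure_pmf p) = Q u"
        unfolding Q_def d_def by (subst nn_integral_cmult[symmetric]) (simp_all add: ennreal_mult'[symmetric] mult_ac)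
      finally show ?thesis .
    qed
    finally show ?thesis .
  qed
  have A_meas: "(\<lambda>u. A u) \<in> borel_measurable ?G" unfolding A_def by (intro meas_G) measurable
  have C_meas: "(\<lambda>u. C u) \<in> borel_measurable ?G" unfolding C_def by (intro meas_G) measurable
  have Q_meas: "Q \<in> borel_measurable ?G"
    unfolding Q_def by (intro pmf_nn_integral_measurable meas_G) measurable
  have "(\<integral>\<^sup>+ u. \<integral>\<^sup>+ b. ennreal ((norm (zo_est loss B \<mu> M \<theta> u b))\<^sup>2) \<partial>?P \<partial>?G)
      \<le> (\<integral>\<^sup>+ u. ennreal (A u) + ennreal (C u) + ennreal (4 / real B) * Q u \<partial>?G)"
    using inner by (intro nn_integral_mono) (simp add: ennreal_plus A_nn C_nn)
  also have "\<dots> = (\<integral>\<^sup>+ u. ennreal (A u) \<partial>?G) + (\<integral>\<^sup>+ u. ennreal (C u) \<partial>?G) + ennreal (4 / real B) * (\<integral>\<^sup>+ u. Q u \<partial>?G)"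
    using A_meas C_meas Q_meas by (simp add: nn_integral_add nn_integral_cmult)
  also have "\<dots> \<le> ennreal (4 * ((S + 2) * (norm (gL \<theta>))\<^sup>2)) + ennreal (Lsm\<^sup>2 * \<mu>\<^sup>2 / 2 * (15 * S ^ 3)) + ennreal (4 / real B) * ennreal ((S + 2) * \<sigma>\<^sup>2)"
  proof (intro add_mono mult_left_mono order.refl)
    show "(\<integral>\<^sup>+ u. ennreal (A u) \<partial>?G) \<le> ennreal (4 * ((S + 2) * (norm (gL \<theta>))\<^sup>2))"
    proof -
      have eqA: "ennreal (A u) = 4 * ennreal (((M *v gL \<theta>) \<bullet> u)\<^sup>2 * (norm (M *v u))\<^sup>2)" for u
        by (simp add: A_def sym_inner[OF M_sym] ennreal_mult' mult.assoc)
      have "(\<integral>\<^sup>+ u. ennreal (A u) \<partial>?G) = 4 * (\<integral>\<^sup>+ u. ennreal (((M *v gL \<theta>) \<bullet> u)\<^sup>2 * (norm (M *v u))\<^sup>2) \<partial>?G)"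
        unfolding eqA by (rule nn_integral_cmult) (intro meas_G, measurable)
      also have "\<dots> \<le> 4 * ennreal ((S + 2) * (norm (M *v gL \<theta>))\<^sup>2)"
        using gauss_A5[of M "M *v gL \<theta>", OF nb] by (intro mult_left_mono) (simp_all add: S_def)
      also have "\<dots> \<le> 4 * ennreal ((S + 2) * (norm (gL \<theta>))\<^sup>2)"
        using S_nn nb[of "gL \<theta>"] by (intro mult_left_mono ennreal_leI mult_left_mono power_mono) auto
      also have "\<dots> = ennreal (4 * ((S + 2) * (norm (gL \<theta>))\<^sup>2))"
        by (simp add: ennreal_mult')
      finally show ?thesis .
    qed
    show "(\<integral>\<^sup>+ u. ennreal (C u) \<partial>?G) \<le> ennreal (Lsm\<^sup>2 * \<mu>\<^sup>2 / 2 * (15 * S ^ 3))"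
    proof -
      have "(\<integral>\<^sup>+ u. ennreal (C u) \<partial>?G) = ennreal (Lsm\<^sup>2 * \<mu>\<^sup>2 / 2) * (\<integral>\<^sup>+ u. ennreal ((norm (M *v u))^6) \<partial>?G)"
        unfolding C_def by (subst nn_integral_cmult[symmetric]) (simp_all add: ennreal_mult[symmetric] meas_G)
      also have "\<dots> \<le> ennreal (Lsm\<^sup>2 * \<mu>\<^sup>2 / 2) * ennreal (15 * S ^ 3)"
        using gauss_A6[of M] by (intro mult_left_mono) (simp_all add: S_def)
      also have "\<dots> = ennreal (Lsm\<^sup>2 * \<mu>\<^sup>2 / 2 * (15 * S ^ 3))"
        by (rule ennreal_mult[symmetric]) (use S_nn in simp_all)
      finally show ?thesis .
    qed
    show "(\<integral>\<^sup>+ u. Q u \<partial>?G) \<le> ennreal ((S + 2) * \<sigma>\<^sup>2)"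
    proof -
      have "(\<integral>\<^sup>+ u. Q u \<partial>?G) = (\<integral>\<^sup>+ i. \<integral>\<^sup>+ u. ennreal ((d i \<bullet> (M *v u))\<^sup>2 * (norm (M *v u))\<^sup>2) \<partial>?G \<partial>measure_pmf p)"
        unfolding Q_def by (rule pmf_tonelli) (intro meas_G, measurable)
      also have "\<dots> \<le> (\<integral>\<^sup>+ i. ennreal (S + 2) * ennreal ((norm (gL \<theta> - gl i \<theta>))\<^sup>2) \<partial>measure_pmf p)"
      proof (intro nn_integral_mono)
        fix i
        have "(\<integral>\<^sup>+ u. ennreal ((d i \<bullet> (M *v u))\<^sup>2 * (norm (M *v u))\<^sup>2) \<partial>?G)
            = (\<integral>\<^sup>+ u. ennreal (((M *v d i) \<bullet> u)\<^sup>2 * (norm (M *v u))\<^sup>2) \<partial>?G)"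
          by (simp add: sym_inner[OF M_sym])
        also have "\<dots> \<le> ennreal ((S + 2) * (norm (M *v d i))\<^sup>2)"
          using gauss_A5[of M "M *v d i", OF nb] by (simp add: S_def)
        also have "\<dots> \<le> ennreal ((S + 2) * (norm (d i))\<^sup>2)"
          using S_nn nb[of "d i"] by (intro ennreal_leI mult_left_mono power_mono) auto
        also have "\<dots> = ennreal (S + 2) * ennreal ((norm (gL \<theta> - gl i \<theta>))\<^sup>2)"
          using S_nn by (simp add: ennreal_mult d_def norm_minus_commute)
        finally show "(\<integral>\<^sup>+ u. ennreal ((d i \<bullet> (M *v u))\<^sup>2 * (norm (M *v u))\<^sup>2) \<partial>?G)
            \<le> ennreal (S + 2) * ennreal ((norm (gL \<theta> - gl i \<theta>))\<^sup>2)" .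
      qed
      also have "\<dots> = ennreal (S + 2) * (\<integral>\<^sup>+ i. ennreal ((norm (gL \<theta> - gl i \<theta>))\<^sup>2) \<partial>measure_pmf p)"
        by (rule nn_integral_cmult) simp
      also have "\<dots> \<le> ennreal (S + 2) * ennreal (\<sigma>\<^sup>2)"
        by (intro mult_left_mono var) simp
      also have "\<dots> = ennreal ((S + 2) * \<sigma>\<^sup>2)"
        using S_nn by (simp add: ennreal_mult)
      finally show ?thesis .
    qed
  qed simp
  also have "ennreal (4 * ((S + 2) * (norm (gL \<theta>))\<^sup>2)) + ennreal (Lsm\<^sup>2 * \<mu>\<^sup>2 / 2 * (15 * S ^ 3)) + ennreal (4 / real B) * ennreal ((S + 2) * \<sigma>\<^sup>2)
      \<le> ennreal (15 * \<mu>\<^sup>2 * Lsm\<^sup>2 * s ^ 3 / 2 + 4 * (s + 2) * ((norm (gL \<theta>))\<^sup>2 + \<sigma>\<^sup>2 / real B))"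
  proof -
    have nn1: "0 \<le> 4 * ((S + 2) * (norm (gL \<theta>))\<^sup>2)" using S_nn by simp
    have nn2: "0 \<le> Lsm\<^sup>2 * \<mu>\<^sup>2 / 2 * (15 * S ^ 3)" using S_nn by simp
    have nn3: "0 \<le> 4 / real B * ((S + 2) * \<sigma>\<^sup>2)" using S_nn by simp
    have "ennreal (4 / real B) * ennreal ((S + 2) * \<sigma>\<^sup>2) = ennreal (4 / real B * ((S + 2) * \<sigma>\<^sup>2))"
      by (rule ennreal_mult[symmetric]) (use S_nn in simp_all)
    moreover have "ennreal (4 * ((S + 2) * (norm (gL \<theta>))\<^sup>2)) + ennreal (Lsm\<^sup>2 * \<mu>\<^sup>2 / 2 * (15 * S ^ 3)) + ennreal (4 / real B * ((S + 2) * \<sigma>\<^sup>2))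
        = ennreal (4 * ((S + 2) * (norm (gL \<theta>))\<^sup>2) + Lsm\<^sup>2 * \<mu>\<^sup>2 / 2 * (15 * S ^ 3) + 4 / real B * ((S + 2) * \<sigma>\<^sup>2))"
      using nn1 nn2 nn3 by (simp add: ennreal_plus)
    moreover have "4 * ((S + 2) * (norm (gL \<theta>))\<^sup>2) + Lsm\<^sup>2 * \<mu>\<^sup>2 / 2 * (15 * S ^ 3) + 4 / real B * ((S + 2) * \<sigma>\<^sup>2)
        \<le> 15 * \<mu>\<^sup>2 * Lsm\<^sup>2 * s ^ 3 / 2 + 4 * (s + 2) * ((norm (gL \<theta>))\<^sup>2 + \<sigma>\<^sup>2 / real B)"
    proof -
      have "S ^ 3 \<le> s ^ 3" using power_mono[OF S_le S_nn] .
      then have "(Lsm\<^sup>2 * \<mu>\<^sup>2 * 15 / 2) * S ^ 3 \<le> (Lsm\<^sup>2 * \<mu>\<^sup>2 * 15 / 2) * s ^ 3"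
        by (intro mult_left_mono) auto
      then have r1: "Lsm\<^sup>2 * \<mu>\<^sup>2 / 2 * (15 * S ^ 3) \<le> 15 * \<mu>\<^sup>2 * Lsm\<^sup>2 * s ^ 3 / 2"
        by (simp add: algebra_simps)
      have r2: "4 * ((S + 2) * (norm (gL \<theta>))\<^sup>2) \<le> 4 * ((s + 2) * (norm (gL \<theta>))\<^sup>2)"
        using S_le by (simp add: mult_right_mono)
      have r3: "4 / real B * ((S + 2) * \<sigma>\<^sup>2) \<le> 4 / real B * ((s + 2) * \<sigma>\<^sup>2)"
        using S_le by (intro mult_left_mono mult_right_mono) auto
      have "4 * ((s + 2) * (norm (gL \<theta>))\<^sup>2) + 4 / real B * ((s + 2) * \<sigma>\<^sup>2) = 4 * (s + 2) * ((norm (gL \<theta>))\<^sup>2 + \<sigma>\<^sup>2 / real B)"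
        by (simp add: algebra_simps)
      with r1 r2 r3 show ?thesis by linarith
    qed
    ultimately show ?thesis by (simp add: ennreal_leI)
  qed
  finally show ?thesis .
  qed
  from part1 part2 show ?thesis by blast
qed


end
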